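(* Consider the general LPP model described in the context, fix $\eta_0\in(0,\infty)$, $u\in\mathbb{R}$, set $\eta=\eta_0+ut^{-2/3}$, and suppose Assumptions A2 and A3 hold. Let $D$ be a probability distribution. If, as $t\to\infty$, $$\frac{\tilde L_{\mathcal{L}^-\to(\eta t,t)}-\mu t}{t^{1/3}}-\frac{\tilde L_{\mathcal{L}^+\to E^+}-\mu t+\mu_0t^\nu}{t^{1/3}}\Rightarrow D,$$ then also $$\frac{\tilde L_{\mathcal{L}^-\to(\eta t,t)}-\mu t}{t^{1/3}}-\frac{\tilde L_{\mathcal{L}^+\to E^+}+L_{E^+\to(\eta t,t)}-\mu t}{t^{1/3}}\Rightarrow D.$$
   Context: LPP: for independent nonnegative $\{\omega_{i,j}\}$, an up-right path is a sequence of points of $\mathbb{Z}^2$ with increments in $\{(1,0),(0,1)\}$; $L_{S_A\to S_E}=\max_\pi\sum_{(i,j)\in\pi\setminus S_A}\omega_{i,j}$ over up-right paths from $S_A$ to $S_E$ ($-\infty$ if none); $\pi^{\max}_{L_{A\to B}}$ is the a.s. unique maximizing path; non-integer coordinates are understood as integer parts. General model: integers $x_k(0)$, $k\in\mathbb{Z}$, with $x_{k+1}(0)<x_k(0)$, $x_0(0)=1$, $x_1(0)<-1$; $\omega_{i,j}$ independent exponential with rate $v_j>0$; $\mathcal{L}^+=\{(k+x_k(0),k):k>0\}$, $\mathcal{L}^-=\{(k+x_k(0),k):k\le0\}$. Let $\mu\in\mathbb{R}$ and $G_1(\cdot;u)$ be a continuous distribution function. Assumption A2: there exist $\kappa,\mu_0\in\mathbb{R}$,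 $\nu\in(1/3,1)$ and a continuous distribution function $G_0(\cdot;u)$ such that, with $E^+=(\eta t-\kappa t^\nu,t-t^\nu)$, for all $s$: $\lim_{t\to\infty}\mathbb{P}((L_{E^+\to(\eta t,t)}-\mu_0t^\nu)/t^{\nu/3}\le s)=G_0(s;u)$ and $\lim_{t\to\infty}\mathbb{P}((L_{\mathcal{L}^+\to E^+}-\mu t+\mu_0t^\nu)/t^{1/3}\le s)=G_1(s;u)$. Assumption A3: for some $\beta\in(0,\nu)$, with $D_\gamma=(\lfloor\gamma\eta t\rfloor,\lfloor\gamma t\rfloor)$: $\lim_{t\to\infty}\mathbb{P}(\bigcup_{\gamma\in[0,1-t^{\beta-1}]}\{D_\gamma\in\pi^{\max}_{L_{\mathcal{L}^+\to E^+}}\})=0$ and $\lim_{t\to\infty}\mathbb{P}(\bigcup_{\gamma\in[0,1-t^{\beta-1}]}\{D_\gamma\in\pi^{\max}_{L_{\mathcal{L}^-\to(\eta t,t)}}\})=0$. $\tilde L_{B\to C}$ is defined like $L_{B\to C}$ but maximizing only over up-right paths containing none of the points $D_\gamma$, $\gamma\in[0,1-t^{\beta-1}]$. "$\Rightarrow$" denotes convergence in distribution. *)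

theory Defs
  imports "HOL-Probability.Probability"
begin

type_synonym pt = "int \<times> int"

definition up_right :: "pt list \<Rightarrow> bool" where
  "up_right p \<longleftrightarrow> p \<noteq> [] \<and>
     (\<forall>i. Suc i < length p \<longrightarrow>
        (fst (p ! Suc i) = fst (p ! i) + 1 \<and> snd (p ! Suc i) = snd (p ! i)) \<or>
        (fst (p ! Suc i) = fst (p ! i) \<and> snd (p ! Suc i) = snd (p ! i) + 1))"

definition paths_avoid :: "pt set \<Rightarrow> pt set \<Rightarrow> pt set \<Rightarrow> pt list set" where
  "paths_avoid F A B = {p. up_right p \<and> hd p \<in> A \<and> last p \<in> B \<and> set p \<inter> F = {}}"

definition path_weight :: "(pt \<Rightarrow> real) \<Rightarrow> pt set \<Rightarrow> pt list \<Rightarrow> real" where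
  "path_weight w A p = sum w (set p - A)"

text \<open>Last passage value from A to B maximizing over paths avoiding F
  (supremum in the extended reals; it is -\<infinity> if no such path exists).\<close>
definition lpp_avoid :: "pt set \<Rightarrow> pt set \<Rightarrow> pt set \<Rightarrow> (pt \<Rightarrow> real) \<Rightarrow> ereal" where
  "lpp_avoid F A B w = (SUP p \<in> paths_avoid F A B. ereal (path_weight w A p))"

definition lpp :: "pt set \<Rightarrow> pt set \<Rightarrow> (pt \<Rightarrow> real) \<Rightarrow> ereal" where
  "lpp A B w = lpp_avoid {} A B w"

definition is_max_path :: "pt set \<Rightarrow> pt set \<Rightarrow> (pt \<Rightarrow> real) \<Rightarrow> pt list \<Rightarrow> bool" where
  "is_max_path A B w p \<longleftrightarrow> p \<in> paths_avoid {} A B \<and> ereal (path_weight w A p) = lpp A B w"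

definition cont_distr_fun :: "(real \<Rightarrow> real) \<Rightarrow> bool" where
  "cont_distr_fun F \<longleftrightarrow> continuous_on UNIV F \<and> mono F \<and>
     (F \<longlongrightarrow> 0) at_bot \<and> (F \<longlongrightarrow> 1) at_top"

definition conv_distr :: "'a measure \<Rightarrow> (real \<Rightarrow> 'a \<Rightarrow> ereal) \<Rightarrow> real measure \<Rightarrow> bool" where
  "conv_distr M X D \<longleftrightarrow>
     (\<forall>s. isCont (cdf D) s \<longrightarrow>
        ((\<lambda>t. measure M {\<omega> \<in> space M. X t \<omega> \<le> ereal s}) \<longlongrightarrow> cdf D s) at_top)"


text \<open>Geometry of the model; non-integer coordinates are replaced by their integer parts (floor).\<close>
definition eta :: "real \<Rightarrow> real \<Rightarrow> real \<Rightarrow> real" where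
  "eta \<eta>0 u t = \<eta>0 + u * t powr (-2/3)"

definition Lplus :: "(int \<Rightarrow> int) \<Rightarrow> pt set" where
  "Lplus x = {(k + x k, k) | k. k > 0}"

definition Lminus :: "(int \<Rightarrow> int) \<Rightarrow> pt set" where
  "Lminus x = {(k + x k, k) | k. k \<le> 0}"

definition Eplus :: "real \<Rightarrow> real \<Rightarrow> real \<Rightarrow> real \<Rightarrow> real \<Rightarrow> pt" where
  "Eplus \<eta>0 u \<kappa> \<nu> t = (\<lfloor>eta \<eta>0 u t * t - \<kappa> * t powr \<nu>\<rfloor>, \<lfloor>t - t powr \<nu>\<rfloor>)"

definition Pend :: "real \<Rightarrow> real \<Rightarrow> real \<Rightarrow> pt" where
  "Pend \<eta>0 u t = (\<lfloor>eta \<eta>0 u t * t\<rfloor>, \<lfloor>t\<rfloor>)"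

definition Dset :: "real \<Rightarrow> real \<Rightarrow> real \<Rightarrow> real \<Rightarrow> pt set" where
  "Dset \<eta>0 u \<beta> t = {(\<lfloor>\<gamma> * eta \<eta>0 u t * t\<rfloor>, \<lfloor>\<gamma> * t\<rfloor>) | \<gamma>. 0 \<le> \<gamma> \<and> \<gamma> \<le> 1 - t powr (\<beta> - 1)}"

end

theory Submission
  imports Defs "HOL-Probability.Probability"
begin



lemma key_ereal:
  fixes a b :: ereal and l m n c s dl dh :: real
  assumes c: "c > 0" and d: "\<bar>(l - n) / c\<bar> \<le> min dl dh"
  shows "(a - ereal m) / ereal c - (b - ereal m + ereal n) / ereal c \<le> ereal (s - dl)
           \<Longrightarrow> (a - ereal m) / ereal c - (b + ereal l - ereal m) / ereal c \<le> ereal s"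
    and "(a - ereal m) / ereal c - (b + ereal l - ereal m) / ereal c \<le> ereal s
           \<Longrightarrow> (a - ereal m) / ereal c - (b - ereal m + ereal n) / ereal c \<le> ereal (s + dh)"
proof -
  have e1: "(x - y) / c - (z - y + n) / c - (l - n)/c = (x - y)/c - (z + l - y)/c" for x y z :: real
    using c by (simp add: field_simps)
  show "(a - ereal m) / ereal c - (b - ereal m + ereal n) / ereal c \<le> ereal (s - dl)
           \<Longrightarrow> (a - ereal m) / ereal c - (b + ereal l - ereal m) / ereal c \<le> ereal s"
    using c d e1[of _ m] by (cases a; cases b) (auto simp: abs_le_iff diff_divide_distrib add_divide_distrib)
  show "(a - ereal m) / ereal c - (b + ereal l - ereal m) / ereal c \<le> ereal s
           \<Longrightarrow> (a - ereal m) / ereal c - (b - ereal m + ereal n) / ereal c \<le> ereal (s + dh)"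
    using c d e1[of _ m] by (cases a; cases b) (auto simp: abs_le_iff diff_divide_distrib add_divide_distrib)
qed

lemma lpp_avoid_meas:
  assumes "\<And>q. W q \<in> borel_measurable M"
  shows "(\<lambda>\<omega>. lpp_avoid F A B (\<lambda>p. W p \<omega>)) \<in> borel_measurable M"
  unfolding lpp_avoid_def path_weight_def
  by (rule borel_measurable_SUP) (auto intro!: borel_measurable_ereal borel_measurable_sum assms)


theorem proposition2p8:
  fixes M :: "'a measure"
    and W :: "pt \<Rightarrow> 'a \<Rightarrow> real"
    and v :: "int \<Rightarrow> real"
    and x :: "int \<Rightarrow> int"
    and \<eta>0 u \<mu> \<kappa> \<mu>0 \<nu> \<beta> :: real
    and G0 G1 :: "real \<Rightarrow> real \<Rightarrow> real"
    and D :: "real measure"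
  assumes M: "prob_space M"
    and W_indep: "prob_space.indep_vars M (\<lambda>_. borel) W UNIV"
    and v_pos: "\<And>j. v j > 0"
    and W_exp: "\<And>i j. distributed M lborel (W (i, j)) (exponential_density (v j))"
    and x_decr: "\<And>k. x (k + 1) < x k"
    and x0: "x 0 = 1"
    and x1: "x 1 < -1"
    and \<eta>0_pos: "\<eta>0 > 0"
    and G1: "cont_distr_fun (\<lambda>s. G1 s u)"
    \<comment> \<open>Assumption A2\<close>
    and \<nu>: "1/3 < \<nu>" "\<nu> < 1"
    and G0: "cont_distr_fun (\<lambda>s. G0 s u)"
    and A2_1: "\<And>s. ((\<lambda>t. measure M {\<omega> \<in> space M.
                 (lpp {Eplus \<eta>0 u \<kappa> \<nu> t} {Pend \<eta>0 u t} (\<lambda>p. W p \<omega>) - ereal (\<mu>0 * t powr \<nu>))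
                   / ereal (t powr (\<nu> / 3)) \<le> ereal s}) \<longlongrightarrow> G0 s u) at_top"
    and A2_2: "\<And>s. ((\<lambda>t. measure M {\<omega> \<in> space M.
                 (lpp (Lplus x) {Eplus \<eta>0 u \<kappa> \<nu> t} (\<lambda>p. W p \<omega>) - ereal (\<mu> * t) + ereal (\<mu>0 * t powr \<nu>))
                   / ereal (t powr (1 / 3)) \<le> ereal s}) \<longlongrightarrow> G1 s u) at_top"
    \<comment> \<open>Assumption A3\<close>
    and \<beta>: "0 < \<beta>" "\<beta> < \<nu>"
    and A3_1: "((\<lambda>t. measure M {\<omega> \<in> space M.
                 \<exists>p. is_max_path (Lplus x) {Eplus \<eta>0 u \<kappa> \<nu> t} (\<lambda>q. W q \<omega>) p \<and> set p \<inter> Dset \<eta>0 u \<beta> t \<noteq> {}})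
               \<longlongrightarrow> 0) at_top"
    and A3_2: "((\<lambda>t. measure M {\<omega> \<in> space M.
                 \<exists>p. is_max_path (Lminus x) {Pend \<eta>0 u t} (\<lambda>q. W q \<omega>) p \<and> set p \<inter> Dset \<eta>0 u \<beta> t \<noteq> {}})
               \<longlongrightarrow> 0) at_top"
    \<comment> \<open>D is a probability distribution\<close>
    and D: "real_distribution D"
    and hyp: "conv_distr M (\<lambda>t \<omega>.
                (lpp_avoid (Dset \<eta>0 u \<beta> t) (Lminus x) {Pend \<eta>0 u t} (\<lambda>p. W p \<omega>) - ereal (\<mu> * t)) / ereal (t powr (1/3))
              - (lpp_avoid (Dset \<eta>0 u \<beta> t) (Lplus x) {Eplus \<eta>0 u \<kappa> \<nu> t} (\<lambda>p. W p \<omega>) - ereal (\<mu> * t) + ereal (\<mu>0 * t powr \<nu>))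
                  / ereal (t powr (1/3))) D"
  shows "conv_distr M (\<lambda>t \<omega>.
                (lpp_avoid (Dset \<eta>0 u \<beta> t) (Lminus x) {Pend \<eta>0 u t} (\<lambda>p. W p \<omega>) - ereal (\<mu> * t)) / ereal (t powr (1/3))
              - (lpp_avoid (Dset \<eta>0 u \<beta> t) (Lplus x) {Eplus \<eta>0 u \<kappa> \<nu> t} (\<lambda>p. W p \<omega>) + lpp {Eplus \<eta>0 u \<kappa> \<nu> t} {Pend \<eta>0 u t} (\<lambda>p. W p \<omega>)
                   - ereal (\<mu> * t)) / ereal (t powr (1/3))) D"
proof -
  interpret prob_space M by (rule M)
  interpret Dd: real_distribution D by (rule D)
  define LM where "LM = (\<lambda>t \<omega>. lpp_avoid (Dset \<eta>0 u \<beta> t) (Lminus x) {Pend \<eta>0 u t} (\<lambda>p. W p \<omega>))"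
  define LP where "LP = (\<lambda>t \<omega>. lpp_avoid (Dset \<eta>0 u \<beta> t) (Lplus x) {Eplus \<eta>0 u \<kappa> \<nu> t} (\<lambda>p. W p \<omega>))"
  define L where "L = (\<lambda>t \<omega>. lpp {Eplus \<eta>0 u \<kappa> \<nu> t} {Pend \<eta>0 u t} (\<lambda>p. W p \<omega>))"
  define X where "X = (\<lambda>t \<omega>. (LM t \<omega> - ereal (\<mu> * t)) / ereal (t powr (1/3))
              - (LP t \<omega> - ereal (\<mu> * t) + ereal (\<mu>0 * t powr \<nu>)) / ereal (t powr (1/3)))"
  define Y where "Y = (\<lambda>t \<omega>. (LM t \<omega> - ereal (\<mu> * t)) / ereal (t powr (1/3))
              - (LP t \<omega> + L t \<omega> - ereal (\<mu> * t)) / ereal (t powr (1/3)))"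
  define Z where "Z = (\<lambda>t \<omega>. (L t \<omega> - ereal (\<mu>0 * t powr \<nu>)) / ereal (t powr (\<nu> / 3)))"
  have hypX: "conv_distr M X D" using hyp unfolding X_def LM_def LP_def .
  have A21: "((\<lambda>t. measure M {\<omega> \<in> space M. Z t \<omega> \<le> ereal s}) \<longlongrightarrow> G0 s u) at_top" for s
    using A2_1[of s] unfolding Z_def L_def .
  have Wm: "W q \<in> borel_measurable M" for q
  proof (cases q)
    case (Pair i j)
    then show ?thesis using distributed_measurable[OF W_exp[of i j]] by simp
  qed
  have LMm: "LM t \<in> borel_measurable M" for t
    unfolding LM_def by (rule lpp_avoid_meas[OF Wm])
  have LPm: "LP t \<in> borel_measurable M" for t
    unfolding LP_def by (rule lpp_avoid_meas[OF Wm])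
  have Lm: "L t \<in> borel_measurable M" for t
    unfolding L_def lpp_def by (rule lpp_avoid_meas[OF Wm])
  have Xm: "X t \<in> borel_measurable M" for t
    unfolding X_def by (intro borel_measurable_ereal_diff borel_measurable_ereal_divide
        borel_measurable_ereal_add borel_measurable_const LMm LPm)
  have Ym: "Y t \<in> borel_measurable M" for t
    unfolding Y_def by (intro borel_measurable_ereal_diff borel_measurable_ereal_divide
        borel_measurable_ereal_add borel_measurable_const LMm LPm Lm)
  have Zm: "Z t \<in> borel_measurable M" for t
    unfolding Z_def by (intro borel_measurable_ereal_diff borel_measurable_ereal_divide
        borel_measurable_const Lm)
  have setle: "{\<omega> \<in> space M. f \<omega> \<le> ereal c} \<in> sets M" if "f \<in> borel_measurable M" for f :: "'a \<Rightarrow> ereal" and c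
    using that by measurable
  have setG: "{\<omega> \<in> space M. ereal c1 < f \<omega> \<and> f \<omega> \<le> ereal c} \<in> sets M" if "f \<in> borel_measurable M" for f :: "'a \<Rightarrow> ereal" and c c1
    using that by measurable
  have monocdf: "mono (cdf D)" unfolding mono_def by (simp add: Dd.cdf_nondecreasing)
  have "conv_distr M Y D"
    unfolding conv_distr_def
  proof (intro allI impI)
    fix s assume cs: "isCont (cdf D) s"
    show "((\<lambda>t. measure M {\<omega> \<in> space M. Y t \<omega> \<le> ereal s}) \<longlongrightarrow> cdf D s) at_top"
      unfolding tendsto_iff
    proof (intro allI impI)
      fix e :: real assume e: "e > 0"
      define e' where "e' = e / 6"
      have e': "e' > 0" using e by (simp add: e'_def)
      obtain \<eta> where \<eta>: "\<eta> > 0" and \<eta>c: "\<And>y. dist y s < \<eta> \<Longrightarrow> dist (cdf D y) (cdf D s) < e'"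
        using cs e' unfolding continuous_at_eps_delta by metis
      obtain sh where sh: "sh \<in> {s<..<s+\<eta>}" "isCont (cdf D) sh"
        using open_minus_countable[OF mono_ctble_discont[OF monocdf], of "{s<..<s+\<eta>}"] \<eta> by auto
      obtain sl where sl: "sl \<in> {s-\<eta><..<s}" "isCont (cdf D) sl"
        using open_minus_countable[OF mono_ctble_discont[OF monocdf], of "{s-\<eta><..<s}"] \<eta> by auto
      define \<delta> where "\<delta> = min (s - sl) (sh - s)"
      have \<delta>: "\<delta> > 0" using sh sl by (auto simp: \<delta>_def)
      have csh: "cdf D sh \<le> cdf D s + e'" using \<eta>c[of sh] sh by (auto simp: dist_real_def)
      have csl: "cdf D sl \<ge> cdf D s - e'" using \<eta>c[of sl] sl by (auto simp: dist_real_def)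
      obtain N1 where N1: "\<And>y. y \<le> N1 \<Longrightarrow> G0 y u < e'"
        using order_tendstoD(2)[OF conjunct1[OF conjunct2[OF conjunct2[OF G0[unfolded cont_distr_fun_def]]]] e']
        unfolding eventually_at_bot_linorder by auto
      obtain N2 where N2: "\<And>y. y \<ge> N2 \<Longrightarrow> G0 y u > 1 - e'"
        using order_tendstoD(1)[OF conjunct2[OF conjunct2[OF conjunct2[OF G0[unfolded cont_distr_fun_def]]]], of "1 - e'"] e'
        unfolding eventually_at_top_linorder by auto
      define K where "K = max 1 (max (-N1) N2)"
      have K: "K > 0" "G0 (-K) u < e'" "G0 K u > 1 - e'"
        using N1[of "-K"] N2[of K] by (auto simp: K_def)
      have ev1: "\<forall>\<^sub>F t in at_top. dist (measure M {\<omega> \<in> space M. X t \<omega> \<le> ereal sl}) (cdf D sl) < e'"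
        using hypX sl(2) e' unfolding conv_distr_def tendsto_iff by blast
      have ev2: "\<forall>\<^sub>F t in at_top. dist (measure M {\<omega> \<in> space M. X t \<omega> \<le> ereal sh}) (cdf D sh) < e'"
        using hypX sh(2) e' unfolding conv_distr_def tendsto_iff by blast
      have ev3: "\<forall>\<^sub>F t in at_top. measure M {\<omega> \<in> space M. Z t \<omega> \<le> ereal K} > 1 - 2 * e'"
        using order_tendstoD(1)[OF A21[of K], of "1 - 2*e'"] K e' by auto
      have ev4: "\<forall>\<^sub>F t in at_top. measure M {\<omega> \<in> space M. Z t \<omega> \<le> ereal (-K)} < e'"
        using order_tendstoD(2)[OF A21[of "-K"]] K by auto
      have tp: "((\<lambda>t::real. t powr ((\<nu> - 1) / 3)) \<longlongrightarrow> 0) at_top"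
        by (rule tendsto_neg_powr) (use \<nu> in \<open>auto simp: filterlim_ident\<close>)
      have ev5: "\<forall>\<^sub>F t in at_top. t > 0 \<and> t powr ((\<nu> - 1) / 3) < \<delta> / K"
        using eventually_conj[OF eventually_gt_at_top[of 0] order_tendstoD(2)[OF tp, of "\<delta>/K"]] \<delta> K
        by auto
      show "\<forall>\<^sub>F t in at_top. dist (measure M {\<omega> \<in> space M. Y t \<omega> \<le> ereal s}) (cdf D s) < e"
        using ev1 ev2 ev3 ev4 ev5
      proof eventually_elim
        case (elim t)
        have t: "t > 0" and tK: "K * t powr ((\<nu> - 1) / 3) \<le> \<delta>"
          using elim(5) K by (auto simp: field_simps)
        define G where "G = {\<omega> \<in> space M. ereal (-K) < Z t \<omega> \<and> Z t \<omega> \<le> ereal K}"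
        define Xl where "Xl = {\<omega> \<in> space M. X t \<omega> \<le> ereal sl}"
        define Xh where "Xh = {\<omega> \<in> space M. X t \<omega> \<le> ereal sh}"
        define Ys where "Ys = {\<omega> \<in> space M. Y t \<omega> \<le> ereal s}"
        define Zk where "Zk = {\<omega> \<in> space M. Z t \<omega> \<le> ereal K}"
        define Zn where "Zn = {\<omega> \<in> space M. Z t \<omega> \<le> ereal (-K)}"
        have sets: "G \<in> sets M" "Xl \<in> sets M" "Xh \<in> sets M" "Ys \<in> sets M" "Zk \<in> sets M" "Zn \<in> sets M"
          unfolding G_def Xl_def Xh_def Ys_def Zk_def Zn_def
          by (auto intro!: setle setG Xm Ym Zm)
        have "space M - G \<subseteq> Zn \<union> (space M - Zk)"
          unfolding G_def Zn_def Zk_def by (auto simp: not_less)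
        hence "prob (space M - G) \<le> prob (Zn \<union> (space M - Zk))"
          using sets by (intro finite_measure_mono) auto
        also have "\<dots> \<le> prob Zn + prob (space M - Zk)"
          using sets by (intro measure_Un_le) auto
        also have "\<dots> = prob Zn + (1 - prob Zk)" using sets by (simp add: prob_compl)
        finally have bad: "prob (space M - G) < 3 * e'"
          using elim(3,4) unfolding Zn_def Zk_def by linarith
        have good: "\<exists>l. L t \<omega> = ereal l \<and> \<bar>(l - \<mu>0 * t powr \<nu>) / t powr (1/3)\<bar> \<le> min (s - sl) (sh - s)"
          if "\<omega> \<in> G" for \<omega>
        proof (cases "L t \<omega>")
          case (real l)
          have zb: "\<bar>(l - \<mu>0 * t powr \<nu>) / t powr (\<nu>/3)\<bar> \<le> K"
            using that real t unfolding G_def Z_def by (auto simp: abs_le_iff)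
          have pw: "t powr ((\<nu> - 1) / 3) = t powr (\<nu>/3) / t powr (1/3)"
            using t by (simp add: powr_diff[symmetric] diff_divide_distrib)
          have "(l - \<mu>0 * t powr \<nu>) / t powr (1/3) = (l - \<mu>0 * t powr \<nu>) / t powr (\<nu>/3) * t powr ((\<nu> - 1) / 3)"
            using t by (simp add: pw)
          hence "\<bar>(l - \<mu>0 * t powr \<nu>) / t powr (1/3)\<bar> = \<bar>(l - \<mu>0 * t powr \<nu>) / t powr (\<nu>/3)\<bar> * t powr ((\<nu> - 1) / 3)"
            by (simp only: abs_mult abs_of_nonneg[OF powr_ge_zero])
          also have "\<dots> \<le> K * t powr ((\<nu> - 1) / 3)"
            by (rule mult_right_mono[OF zb powr_ge_zero])
          finally have "\<bar>(l - \<mu>0 * t powr \<nu>) / t powr (1/3)\<bar> \<le> K * t powr ((\<nu> - 1) / 3)" .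
          then show ?thesis using real tK unfolding \<delta>_def by auto
        next
          case PInf
          then show ?thesis using that t unfolding G_def Z_def by auto
        next
          case MInf
          then show ?thesis using that t unfolding G_def Z_def by auto
        qed
        have inc1: "Xl \<subseteq> Ys \<union> (space M - G)"
        proof
          fix \<omega> assume w: "\<omega> \<in> Xl"
          show "\<omega> \<in> Ys \<union> (space M - G)"
          proof (cases "\<omega> \<in> G")
            case True
            then obtain l where l: "L t \<omega> = ereal l" "\<bar>(l - \<mu>0 * t powr \<nu>) / t powr (1/3)\<bar> \<le> min (s - sl) (sh - s)"
              using good by blast
            have "X t \<omega> \<le> ereal (s - (s - sl))" using w unfolding Xl_def by simp
            from key_ereal(1)[OF _ l(2), of "LM t \<omega>" "\<mu> * t" "LP t \<omega>" s] this t
            have "Y t \<omega> \<le> ereal s" unfolding X_def Y_def l(1) by simp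
            then show ?thesis using w unfolding Ys_def Xl_def by auto
          qed (use w Xl_def in auto)
        qed
        have inc2: "Ys \<subseteq> Xh \<union> (space M - G)"
        proof
          fix \<omega> assume w: "\<omega> \<in> Ys"
          show "\<omega> \<in> Xh \<union> (space M - G)"
          proof (cases "\<omega> \<in> G")
            case True
            then obtain l where l: "L t \<omega> = ereal l" "\<bar>(l - \<mu>0 * t powr \<nu>) / t powr (1/3)\<bar> \<le> min (s - sl) (sh - s)"
              using good by blast
            have "Y t \<omega> \<le> ereal s" using w unfolding Ys_def by simp
            from key_ereal(2)[OF _ l(2), of "LM t \<omega>" "\<mu> * t" "LP t \<omega>" s] this t
            have "X t \<omega> \<le> ereal (s + (sh - s))" unfolding X_def Y_def l(1) by simp
            then show ?thesis using w unfolding Ys_def Xh_def by auto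
          qed (use w Ys_def in auto)
        qed
        have "prob Xl \<le> prob (Ys \<union> (space M - G))"
          using sets inc1 by (intro finite_measure_mono) auto
        also have "\<dots> \<le> prob Ys + prob (space M - G)"
          using sets by (intro measure_Un_le) auto
        finally have lo: "prob Xl \<le> prob Ys + prob (space M - G)" .
        have "prob Ys \<le> prob (Xh \<union> (space M - G))"
          using sets inc2 by (intro finite_measure_mono) auto
        also have "\<dots> \<le> prob Xh + prob (space M - G)"
          using sets by (intro measure_Un_le) auto
        finally have hi: "prob Ys \<le> prob Xh + prob (space M - G)" .
        have d1: "\<bar>prob Xl - cdf D sl\<bar> < e'" using elim(1) unfolding Xl_def dist_real_def .
        have d2: "\<bar>prob Xh - cdf D sh\<bar> < e'" using elim(2) unfolding Xh_def dist_real_def .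
        have "\<bar>prob Ys - cdf D s\<bar> < e"
          using lo hi d1 d2 bad csl csh measure_nonneg[of M "space M - G"] e'_def unfolding abs_less_iff by linarith
        then show ?case unfolding Ys_def dist_real_def .
      qed
    qed
  qed
  then show ?thesis unfolding Y_def LM_def LP_def L_def .
qed

end
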